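(* For every fixed $p\in(0,1]$ and every integer $n\ge1$, $\gamma_n^*(p)\ge\gamma_{n+1}^*(p)$.
   Context: SP-UA model: $n$ candidates with distinct overall ranks $1,\dots,n$ ($1$ best) arrive in uniformly random order; the decision maker sees only each candidate's rank among those arrived so far and irrevocably decides (possibly randomly) to make an offer or pass; an offered candidate accepts independently with probability $p$ and then the process stops. A policy collects a candidate of rank $i$ if it makes her an offer and she accepts. $\gamma_n^*(p)=\sup_{\mathcal P}\min_{k\in[n]}\Pr(\mathcal P\text{ collects a candidate with rank}\le k)/(1-(1-p)^k)$, the supremum over policies for $n$ candidates. *)

theory Defs
  imports Complex_Main
begin

text \<open>An arrival order of n candidates is a list xs of their overall ranks
  (rank 1 = best) in order of arrival: a permutation of 1..n.\<close>
definition arrival_orders :: "nat \<Rightarrow> nat list set" where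
  "arrival_orders n = {xs. distinct xs \<and> set xs = {1..n}}"

definition rel_rank :: "nat list \<Rightarrow> nat \<Rightarrow> nat" where
  "rel_rank ys i = card {j. j \<le> i \<and> ys ! j \<le> ys ! i}"

definition rel_ranks :: "nat list \<Rightarrow> nat list" where
  "rel_ranks ys = map (rel_rank ys) [0..<length ys]"

text \<open>A (randomised, behavioural) policy maps the observable history -- the relative
  ranks seen so far (including the current candidate) and the past offer decisions
  (all of which were rejected, otherwise the process would have stopped) -- to the
  probability of making an offer to the current candidate.\<close>
type_synonym policy = "nat list \<times> bool list \<Rightarrow> real"

definition is_policy :: "policy \<Rightarrow> bool" where
  "is_policy P \<longleftrightarrow> (\<forall>h. 0 \<le> P h \<and> P h \<le> 1)"

text \<open>collect_val P p k pre rest acts: probability (over the policy's coins and the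
  acceptance coins) that the policy collects a candidate of rank \<le> k, given that the
  candidates in pre have arrived without the process stopping, acts are the past
  offer decisions, and rest is the remaining arrival sequence.\<close>
fun collect_val :: "policy \<Rightarrow> real \<Rightarrow> nat \<Rightarrow> nat list \<Rightarrow> nat list \<Rightarrow> bool list \<Rightarrow> real" where
  "collect_val P p k pre [] acts = 0"
| "collect_val P p k pre (x # rest) acts =
     (let pre' = pre @ [x]; q = P (rel_ranks pre', acts);
          c = (if x \<le> k then 1 else 0) in
      q * (p * c + (1 - p) * collect_val P p k pre' rest (acts @ [True]))
      + (1 - q) * collect_val P p k pre' rest (acts @ [False]))"

definition collect_prob :: "nat \<Rightarrow> real \<Rightarrow> policy \<Rightarrow> nat \<Rightarrow> real" where
  "collect_prob n p P k =
     (\<Sum>xs\<in>arrival_orders n. collect_val P p k [] xs []) / fact n"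

definition gamma_star :: "nat \<Rightarrow> real \<Rightarrow> real" where
  "gamma_star n p =
     (SUP P\<in>{P. is_policy P}.
        Min ((\<lambda>k. collect_prob n p P k / (1 - (1 - p) ^ k)) ` {1..n}))"

end

theory Submission
  imports Defs
begin


definition ins :: "nat \<Rightarrow> 'a \<Rightarrow> 'a list \<Rightarrow> 'a list" where
  "ins j d ys = take j ys @ d # drop j ys"

lemma ins_snoc: "j \<le> length ys \<Longrightarrow> ins j d (ys @ [x]) = ins j d ys @ [x]"
  by (simp add: ins_def)

lemma ins_end: "ins (length ys) d ys = ys @ [d]"
  by (simp add: ins_def)

lemma ins_0: "ins 0 d ys = d # ys"
  by (simp add: ins_def)

lemma ins_Suc_Cons: "ins (Suc j) d (x # ys) = x # ins j d ys"
  by (simp add: ins_def)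

lemma length_ins[simp]: "j \<le> length ys \<Longrightarrow> length (ins j d ys) = Suc (length ys)"
  by (simp add: ins_def)

lemma filter_ins: "\<not> Q d \<Longrightarrow> filter Q (ins j d ys) = filter Q ys"
  unfolding ins_def by (metis append_take_drop_id filter.simps(2) filter_append)

lemma length_rel_ranks[simp]: "length (rel_ranks ys) = length ys"
  by (simp add: rel_ranks_def)

lemma rel_rank_append: "i < length ys \<Longrightarrow> rel_rank (ys @ zs) i = rel_rank ys i"
  unfolding rel_rank_def
  by (rule arg_cong[where f=card]) (auto simp: nth_append)

lemma rel_ranks_snoc: "rel_ranks (ys @ [x]) = rel_ranks ys @ [rel_rank (ys @ [x]) (length ys)]"
  unfolding rel_ranks_def by (simp add: rel_rank_append)

lemma rel_rank_filter: "i < length ys \<Longrightarrow>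
  rel_rank ys i = length (filter (\<lambda>y. y \<le> ys ! i) (take (Suc i) ys))"
  unfolding rel_rank_def length_filter_conv_card
  by (rule arg_cong[where f=card]) auto

lemma rel_rank_last: "rel_rank (ys @ [x]) (length ys) = Suc (length (filter (\<lambda>y. y \<le> x) ys))"
  by (subst rel_rank_filter) auto

lemma rel_ranks_ins:
  "j \<le> length ys \<Longrightarrow> (\<forall>y\<in>set ys. y < d) \<Longrightarrow> rel_ranks (ins j d ys) = ins j (Suc j) (rel_ranks ys)"
proof (induction ys arbitrary: j rule: rev_induct)
  case Nil
  have "{j. j = 0 \<and> [d] ! j \<le> d} = {0}" by auto
  with Nil show ?case by (simp add: ins_def rel_ranks_def rel_rank_def)
next
  case (snoc x ys)
  show ?case
  proof (cases "j = Suc (length ys)")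
    case True
    have f: "filter (\<lambda>y. y \<le> d) (ys @ [x]) = ys @ [x]"
      using snoc.prems by (auto intro!: filter_True)
    have "ins j d (ys @ [x]) = (ys @ [x]) @ [d]" using True ins_end[of "ys@[x]" d] by simp
    then show ?thesis using True
      apply (simp only: rel_ranks_snoc[of "ys@[x]" d])
      apply (subst rel_rank_last) using f ins_end[of "rel_ranks (ys@[x])"] by simp
  next
    case False
    then have j: "j \<le> length ys" using snoc.prems by simp
    have "ins j d (ys @ [x]) = ins j d ys @ [x]" using ins_snoc[OF j] .
    moreover have "rel_ranks (ins j d ys @ [x]) = rel_ranks (ins j d ys) @ [rel_rank (ins j d ys @ [x]) (length (ins j d ys))]"
      by (rule rel_ranks_snoc)
    moreover have "rel_rank (ins j d ys @ [x]) (length (ins j d ys)) = rel_rank (ys @ [x]) (length ys)"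
      using snoc.prems by (simp add: rel_rank_last filter_ins)
    moreover have "rel_ranks (ins j d ys) = ins j (Suc j) (rel_ranks ys)"
      using snoc.IH[OF j] snoc.prems by simp
    ultimately show ?thesis
      by (simp add: rel_ranks_snoc ins_snoc j)
  qed
qed




definition reach :: "policy \<Rightarrow> nat list \<Rightarrow> bool list \<Rightarrow> real" where
  "reach P r a = (\<Prod>i<length a. (if a!i then P (take (Suc i) r, take i a) else 1 - P (take (Suc i) r, take i a)))"

lemma reach_Nil[simp]: "reach P r [] = 1" by (simp add: reach_def)

lemma reach_snoc: "reach P r (a @ [c]) = reach P r a *
   (if c then P (take (Suc (length a)) r, a) else 1 - P (take (Suc (length a)) r, a))"
proof -
  have "(\<Prod>i<length a. (if (a@[c])!i then P (take (Suc i) r, take i (a@[c])) else 1 - P (take (Suc i) r, take i (a@[c]))))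
     = (\<Prod>i<length a. (if a!i then P (take (Suc i) r, take i a) else 1 - P (take (Suc i) r, take i a)))"
    by (rule prod.cong) (auto simp: nth_append)
  then show ?thesis unfolding reach_def by simp
qed

lemma reach_cong: "(\<And>i. i < length a \<Longrightarrow> P (take (Suc i) r, take i a) = P' (take (Suc i) r, take i a))
  \<Longrightarrow> reach P r a = reach P' r a"
  unfolding reach_def by (rule prod.cong) auto

lemma reach_app_r: "length a \<le> length r \<Longrightarrow> reach P (r @ s) a = reach P r a"
  unfolding reach_def by (rule prod.cong) auto

lemma reach_nonneg: "is_policy P \<Longrightarrow> 0 \<le> reach P r a"
  unfolding reach_def is_policy_def by (rule prod_nonneg) auto

definition Pol :: "policy \<Rightarrow> nat \<Rightarrow> bool option \<Rightarrow> policy" where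
  "Pol P j \<beta> h = (if length (snd h) < j then P h else
      (case \<beta> of None \<Rightarrow> 0 | Some b \<Rightarrow> P (ins j (Suc j) (fst h), ins j b (snd h))))"

lemma Pol_policy: "is_policy P \<Longrightarrow> is_policy (Pol P j \<beta>)"
  unfolding is_policy_def Pol_def by (auto split: option.splits)

lemma reach_Pol_early: "length a \<le> j \<Longrightarrow> reach (Pol P j \<beta>) r a = reach P r a"
  by (rule reach_cong) (simp add: Pol_def)

definition qd :: "policy \<Rightarrow> nat \<Rightarrow> nat list \<Rightarrow> bool list \<Rightarrow> real" where
  "qd P j r a = P (take j r @ [Suc j], take j a)"

definition cc :: "real \<Rightarrow> policy \<Rightarrow> nat \<Rightarrow> bool option \<Rightarrow> nat list \<Rightarrow> bool list \<Rightarrow> real" where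
  "cc p P j \<beta> r a = (case \<beta> of None \<Rightarrow> p * qd P j r a
     | Some True \<Rightarrow> (1 - p) * qd P j r a | Some False \<Rightarrow> 1 - qd P j r a)"

definition wt :: "real \<Rightarrow> policy \<Rightarrow> nat \<Rightarrow> bool option \<Rightarrow> nat list \<Rightarrow> bool list \<Rightarrow> real" where
  "wt p P j \<beta> r a = cc p P j \<beta> r a * reach (Pol P j \<beta>) r a"

definition Dsum :: "real \<Rightarrow> policy \<Rightarrow> nat \<Rightarrow> nat list \<Rightarrow> bool list \<Rightarrow> real" where
  "Dsum p P j r a = wt p P j None r a + wt p P j (Some True) r a + wt p P j (Some False) r a"

definition Ysum :: "real \<Rightarrow> policy \<Rightarrow> nat \<Rightarrow> nat list \<Rightarrow> bool list \<Rightarrow> real" where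
  "Ysum p P j r a = wt p P j None r a * Pol P j None (r, a)
     + wt p P j (Some True) r a * Pol P j (Some True) (r, a)
     + wt p P j (Some False) r a * Pol P j (Some False) (r, a)"

definition Tw :: "nat \<Rightarrow> real \<Rightarrow> policy \<Rightarrow> nat list \<Rightarrow> bool list \<Rightarrow> real" where
  "Tw n p P r a = real (Suc n - length a) * reach P r a + (\<Sum>j<length a. Dsum p P j r a)"

definition Yw :: "nat \<Rightarrow> real \<Rightarrow> policy \<Rightarrow> nat list \<Rightarrow> bool list \<Rightarrow> real" where
  "Yw n p P r a = real (n - length a) * reach P r a * P (r, a) + (\<Sum>j<Suc (length a). Ysum p P j r a)"

definition Qp :: "nat \<Rightarrow> real \<Rightarrow> policy \<Rightarrow> policy" where
  "Qp n p P h = (if length (fst h) = Suc (length (snd h)) \<and> Tw n p P (butlast (fst h)) (snd h) \<noteq> 0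
     then max 0 (min 1 (Yw n p P (fst h) (snd h) / Tw n p P (butlast (fst h)) (snd h))) else 0)"

lemma Qp_policy: "is_policy (Qp n p P)"
  unfolding is_policy_def Qp_def by auto

definition Fv :: "nat \<Rightarrow> real \<Rightarrow> policy \<Rightarrow> nat \<Rightarrow> nat list \<Rightarrow> nat list \<Rightarrow> bool list \<Rightarrow> real" where
  "Fv n p P k pre rest a =
    (\<Sum>j\<in>{length pre..n}. reach P (rel_ranks pre) a * collect_val P p k pre (ins (j - length pre) (Suc n) rest) a)
  + (\<Sum>j<length pre. wt p P j (Some True) (rel_ranks pre) a * collect_val P p k (ins j (Suc n) pre) rest (ins j True a)
                   + wt p P j (Some False) (rel_ranks pre) a * collect_val P p k (ins j (Suc n) pre) rest (ins j False a))"

lemma cv_bounds: "is_policy P \<Longrightarrow> 0 \<le> p \<Longrightarrow> p \<le> 1 \<Longrightarrow>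
   0 \<le> collect_val P p k pre rest a \<and> collect_val P p k pre rest a \<le> 1"
proof (induction rest arbitrary: pre a)
  case Nil then show ?case by simp
next
  case (Cons x rest)
  let ?q = "P (rel_ranks (pre @ [x]), a)"
  let ?c = "(if x \<le> k then 1 else 0) :: real"
  let ?A = "collect_val P p k (pre @ [x]) rest (a @ [True])"
  let ?B = "collect_val P p k (pre @ [x]) rest (a @ [False])"
  have q: "0 \<le> ?q" "?q \<le> 1" using Cons.prems unfolding is_policy_def by auto
  have A: "0 \<le> ?A" "?A \<le> 1" and B: "0 \<le> ?B" "?B \<le> 1" using Cons.IH Cons.prems by auto
  have c: "0 \<le> ?c" "?c \<le> 1" by auto
  have i1: "0 \<le> p * ?c + (1 - p) * ?A" using Cons.prems A c by simp
  have i2: "p * ?c + (1 - p) * ?A \<le> 1"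
  proof -
    have "p * ?c \<le> p" using c Cons.prems by (simp add: mult_left_le)
    moreover have "(1 - p) * ?A \<le> 1 - p" using A Cons.prems by (simp add: mult_left_le)
    ultimately show ?thesis by linarith
  qed
  have v: "collect_val P p k pre (x # rest) a = ?q * (p * ?c + (1 - p) * ?A) + (1 - ?q) * ?B"
    by (simp add: Let_def)
  have "0 \<le> ?q * (p * ?c + (1 - p) * ?A) + (1 - ?q) * ?B"
    using q i1 B by simp
  moreover have "?q * (p * ?c + (1 - p) * ?A) + (1 - ?q) * ?B \<le> ?q * 1 + (1 - ?q) * 1"
    by (rule add_mono; rule mult_left_mono) (use q i2 B in auto)
  ultimately show ?case using v by simp
qed




lemma cc_nonneg: "is_policy P \<Longrightarrow> 0 \<le> p \<Longrightarrow> p \<le> 1 \<Longrightarrow> 0 \<le> cc p P j \<beta> r a"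
  unfolding cc_def qd_def is_policy_def
  by (auto split: option.splits bool.splits)

lemma wt_nonneg: "is_policy P \<Longrightarrow> 0 \<le> p \<Longrightarrow> p \<le> 1 \<Longrightarrow> 0 \<le> wt p P j \<beta> r a"
  unfolding wt_def using cc_nonneg reach_nonneg Pol_policy by (simp add: mult_nonneg_nonneg)

lemma cc_app_r: "j \<le> length r \<Longrightarrow> cc p P j \<beta> (r @ s) a = cc p P j \<beta> r a"
proof -
  assume "j \<le> length r"
  then have eq: "take j (r @ s) = take j r" by simp
  show ?thesis unfolding cc_def qd_def by (simp only: eq)
qed

lemma cc_snoc_a: "j \<le> length a \<Longrightarrow> cc p P j \<beta> r (a @ s) = cc p P j \<beta> r a"
proof -
  assume "j \<le> length a"
  then have eq: "take j (a @ s) = take j a" by simp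
  show ?thesis unfolding cc_def qd_def by (simp only: eq)
qed

lemma wt_app_r: "j \<le> length r \<Longrightarrow> length a \<le> length r \<Longrightarrow> wt p P j \<beta> (r @ s) a = wt p P j \<beta> r a"
  unfolding wt_def by (simp add: cc_app_r reach_app_r)

lemma Dsum_app_r: "j \<le> length r \<Longrightarrow> length a \<le> length r \<Longrightarrow> Dsum p P j (r @ s) a = Dsum p P j r a"
  unfolding Dsum_def by (simp add: wt_app_r)

lemma wt_snoc: "j \<le> length a \<Longrightarrow> length r = Suc (length a) \<Longrightarrow>
  wt p P j \<beta> r (a @ [c]) = wt p P j \<beta> r a * (if c then Pol P j \<beta> (r, a) else 1 - Pol P j \<beta> (r, a))"
  unfolding wt_def by (simp add: cc_snoc_a reach_snoc)

lemma Dsum_last: "length a = length r \<Longrightarrow> Dsum p P (length a) r a = reach P r a"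
proof -
  assume l: "length a = length r"
  have "reach (Pol P (length a) \<beta>) r a = reach P r a" for \<beta> by (simp add: reach_Pol_early)
  then show ?thesis unfolding Dsum_def wt_def cc_def by (simp add: algebra_simps)
qed

lemma S1:
  assumes l: "length a = length r" and mn: "length a \<le> n"
  shows "Tw n p P r a = real (n - length a) * reach P (r @ [z]) a + (\<Sum>j<Suc (length a). Dsum p P j (r @ [z]) a)"
proof -
  have "(\<Sum>j<Suc (length a). Dsum p P j (r @ [z]) a) = (\<Sum>j<Suc (length a). Dsum p P j r a)"
    by (rule sum.cong) (use l in \<open>auto simp: Dsum_app_r\<close>)
  also have "\<dots> = (\<Sum>j<length a. Dsum p P j r a) + reach P r a"
    using Dsum_last[OF l] by simp
  finally show ?thesis using mn l unfolding Tw_def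
    by (simp add: reach_app_r Suc_diff_le algebra_simps)
qed

lemma Dsum_snoc_T: "j \<le> length a \<Longrightarrow> length r = Suc (length a) \<Longrightarrow>
   Dsum p P j r (a @ [True]) = Ysum p P j r a"
  unfolding Dsum_def Ysum_def by (simp add: wt_snoc)

lemma Dsum_snoc_F: "j \<le> length a \<Longrightarrow> length r = Suc (length a) \<Longrightarrow>
   Dsum p P j r (a @ [False]) = Dsum p P j r a - Ysum p P j r a"
  unfolding Dsum_def Ysum_def by (simp add: wt_snoc algebra_simps)

lemma S2:
  assumes "length r = Suc (length a)"
  shows "Tw n p P r (a @ [True]) = Yw n p P r a"
proof -
  have "(\<Sum>j<Suc (length a). Dsum p P j r (a @ [True])) = (\<Sum>j<Suc (length a). Ysum p P j r a)"
    by (rule sum.cong) (use assms in \<open>auto simp: Dsum_snoc_T\<close>)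
  then show ?thesis using assms unfolding Tw_def Yw_def by (simp add: reach_snoc)
qed

lemma S3:
  assumes l: "length a = length r" and mn: "length a \<le> n"
  shows "Tw n p P (r @ [z]) (a @ [False]) = Tw n p P r a - Yw n p P (r @ [z]) a"
proof -
  have "(\<Sum>j<Suc (length a). Dsum p P j (r @ [z]) (a @ [False])) =
        (\<Sum>j<Suc (length a). Dsum p P j (r @ [z]) a - Ysum p P j (r @ [z]) a)"
    by (rule sum.cong) (use l in \<open>auto simp: Dsum_snoc_F\<close>)
  then show ?thesis using l mn S1[OF l mn, of p P z] unfolding Tw_def Yw_def
    by (simp add: reach_snoc algebra_simps sum.distrib sum_subtractf)
qed

lemma S4:
  assumes l: "length a = length r" and mn: "length a \<le> n" and P: "is_policy P"
    and p: "0 \<le> p" "p \<le> 1"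
  shows "0 \<le> Yw n p P (r @ [z]) a \<and> Yw n p P (r @ [z]) a \<le> Tw n p P r a"
proof -
  let ?r = "r @ [z]"
  have pol: "0 \<le> Pol P j \<beta> h" "Pol P j \<beta> h \<le> 1" for j \<beta> h
    using Pol_policy[OF P, of j \<beta>] unfolding is_policy_def by (cases h; auto)+
  have Pb: "0 \<le> P h" "P h \<le> 1" for h using P unfolding is_policy_def by (cases h; auto)+
  have w: "0 \<le> wt p P j \<beta> ?r a" for j \<beta> using wt_nonneg[OF P p] .
  have Y1: "0 \<le> Ysum p P j ?r a" for j unfolding Ysum_def using w pol by simp
  have Y2: "Ysum p P j ?r a \<le> Dsum p P j ?r a" for j
    unfolding Ysum_def Dsum_def using w pol
    by (intro add_mono mult_right_le_one_le) auto
  have R: "0 \<le> reach P ?r a" by (rule reach_nonneg[OF P])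
  have a1: "0 \<le> real (n - length a) * reach P ?r a * P (?r, a)"
    using R Pb by simp
  have a2: "real (n - length a) * reach P ?r a * P (?r, a) \<le> real (n - length a) * reach P ?r a"
    using R Pb by (simp add: mult_left_le)
  have s1: "0 \<le> (\<Sum>j<Suc (length a). Ysum p P j ?r a)" by (rule sum_nonneg) (use Y1 in auto)
  have s2: "(\<Sum>j<Suc (length a). Ysum p P j ?r a) \<le> (\<Sum>j<Suc (length a). Dsum p P j ?r a)"
    by (rule sum_mono) (use Y2 in auto)
  show ?thesis using a1 a2 s1 s2 S1[OF l mn, of p P z] l unfolding Yw_def by simp
qed




lemma cv_Cons: "collect_val P p k pre (x # rest) a =
   P (rel_ranks (pre @ [x]), a) * (p * (if x \<le> k then 1 else 0) + (1 - p) * collect_val P p k (pre @ [x]) rest (a @ [True]))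
   + (1 - P (rel_ranks (pre @ [x]), a)) * collect_val P p k (pre @ [x]) rest (a @ [False])"
  by (simp add: Let_def)

context
  fixes n :: nat and p :: real and P :: policy and k :: nat and pre :: "nat list" and x :: nat
    and rest :: "nat list" and a :: "bool list"
  assumes kn: "k \<le> n" and la: "length a = length pre" and mn: "length pre < n"
    and pren: "\<forall>y\<in>set pre. y \<le> n" and xn: "x \<le> n"
begin

abbreviation "mP \<equiv> length pre"
abbreviation "dP \<equiv> Suc n"
abbreviation "rP \<equiv> rel_ranks pre"
abbreviation "rQ \<equiv> rel_ranks (pre @ [x])"
abbreviation "cxP \<equiv> (if x \<le> k then 1 else 0) :: real"

lemma r'_eq: "rQ = rP @ [rel_rank (pre @ [x]) mP]"
  by (rule rel_ranks_snoc)

lemma len_r': "length rQ = Suc mP" by simp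

lemma pre'_lt: "\<forall>y\<in>set (pre @ [x]). y < dP" using pren xn by auto

lemma pre_lt: "\<forall>y\<in>set pre. y < dP" using pren by auto

lemma reach_r': "reach P rQ a = reach P rP a"
  using r'_eq la by (simp add: reach_app_r)

lemma rr_ins: "j \<le> mP \<Longrightarrow> rel_ranks (ins j dP pre @ [x]) = ins j (Suc j) rQ"
  using rel_ranks_ins[of j "pre @ [x]" dP] pre'_lt ins_snoc[of j pre dP x] by simp

lemma rr_d: "rel_ranks (pre @ [dP]) = rP @ [Suc mP]"
  using rel_ranks_ins[of mP pre dP] pre_lt ins_end[of pre] ins_end[of rP "Suc mP"] by simp

lemma P1:
  assumes j: "j \<in> {Suc mP..n}"
  shows "reach P rP a * collect_val P p k pre (ins (j - mP) dP (x # rest)) a =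
     p * cxP * (reach P rQ a * P (rQ, a))
     + (1 - p) * (reach P rQ (a @ [True]) * collect_val P p k (pre @ [x]) (ins (j - Suc mP) dP rest) (a @ [True]))
     + reach P rQ (a @ [False]) * collect_val P p k (pre @ [x]) (ins (j - Suc mP) dP rest) (a @ [False])"
proof -
  have e: "j - mP = Suc (j - Suc mP)" using j by auto
  have t: "take (Suc (length a)) rQ = rQ" using la by simp
  show ?thesis
    unfolding e ins_Suc_Cons cv_Cons reach_snoc t reach_r'
    by (simp add: algebra_simps)
qed

lemma P2:
  "reach P rP a * collect_val P p k pre (ins 0 dP (x # rest)) a =
     p * cxP * Ysum p P mP rQ a
     + (1 - p) * (wt p P mP (Some True) rQ (a @ [True]) * collect_val P p k (ins mP dP (pre @ [x])) rest (ins mP True (a @ [True]))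
                + wt p P mP (Some False) rQ (a @ [True]) * collect_val P p k (ins mP dP (pre @ [x])) rest (ins mP False (a @ [True])))
     + (wt p P mP (Some True) rQ (a @ [False]) * collect_val P p k (ins mP dP (pre @ [x])) rest (ins mP True (a @ [False]))
                + wt p P mP (Some False) rQ (a @ [False]) * collect_val P p k (ins mP dP (pre @ [x])) rest (ins mP False (a @ [False])))"
proof -
  have i1: "ins mP dP (pre @ [x]) = pre @ [dP] @ [x]" by (simp add: ins_def)
  have i2: "ins mP b (a @ [c]) = a @ [b] @ [c]" for b c using la by (simp add: ins_def)
  have wt: "wt p P mP \<beta> rQ (a @ [c]) = cc p P mP \<beta> rQ a * reach P rP a *
       (if c then Pol P mP \<beta> (rQ, a) else 1 - Pol P mP \<beta> (rQ, a))" for \<beta> c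
    using wt_snoc[of mP a rQ p P \<beta> c] la unfolding wt_def
    by (simp add: reach_Pol_early reach_r')
  have wt0: "wt p P mP \<beta> rQ a = cc p P mP \<beta> rQ a * reach P rP a" for \<beta>
    using la unfolding wt_def by (simp add: reach_Pol_early reach_r')
  have Pol0: "Pol P mP None (rQ, a) = 0" using la by (simp add: Pol_def)
  have PolS: "Pol P mP (Some b) (rQ, a) = P (rel_ranks ((pre @ [dP]) @ [x]), a @ [b])" for b
    using rr_ins[of mP] i1 la by (simp add: Pol_def ins_def)
  have qd: "qd P mP rQ a = P (rel_ranks (pre @ [dP]), a)"
    using rr_d r'_eq la by (simp add: qd_def)
  have dk: "\<not> dP \<le> k" using kn by simp
  show ?thesis
    unfolding ins_0 cv_Cons[of P p k pre dP] i1 i2 wt Ysum_def wt0 Pol0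
    unfolding cc_def
    apply (simp only: option.case bool.case PolS qd)
    apply (simp only: cv_Cons[of P p k "pre @ [dP]"] append_assoc[symmetric] dk if_False)
    apply (simp add: algebra_simps)
    done
qed

lemma P3:
  assumes j: "j < mP"
  shows "wt p P j (Some True) rP a * collect_val P p k (ins j dP pre) (x # rest) (ins j True a)
       + wt p P j (Some False) rP a * collect_val P p k (ins j dP pre) (x # rest) (ins j False a) =
     p * cxP * Ysum p P j rQ a
     + (1 - p) * (wt p P j (Some True) rQ (a @ [True]) * collect_val P p k (ins j dP (pre @ [x])) rest (ins j True (a @ [True]))
                + wt p P j (Some False) rQ (a @ [True]) * collect_val P p k (ins j dP (pre @ [x])) rest (ins j False (a @ [True])))
     + (wt p P j (Some True) rQ (a @ [False]) * collect_val P p k (ins j dP (pre @ [x])) rest (ins j True (a @ [False]))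
                + wt p P j (Some False) rQ (a @ [False]) * collect_val P p k (ins j dP (pre @ [x])) rest (ins j False (a @ [False])))"
proof -
  have jl: "j \<le> length a" "j \<le> mP" using j la by auto
  have i1: "ins j dP (pre @ [x]) = ins j dP pre @ [x]" by (rule ins_snoc) (use jl in simp)
  have i2: "ins j b (a @ [c]) = ins j b a @ [c]" for b c by (rule ins_snoc) (use jl in simp)
  have wr: "wt p P j \<beta> rQ a = wt p P j \<beta> rP a" for \<beta>
    using r'_eq j la wt_app_r[of j rP a p P \<beta> "[_]"] by simp
  have wt: "wt p P j \<beta> rQ (a @ [c]) = wt p P j \<beta> rP a *
       (if c then Pol P j \<beta> (rQ, a) else 1 - Pol P j \<beta> (rQ, a))" for \<beta> c
    using wt_snoc[of j a rQ p P \<beta> c] la jl by (simp add: wr)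
  have Pol0: "Pol P j None (rQ, a) = 0" using jl by (simp add: Pol_def)
  have PolS: "Pol P j (Some b) (rQ, a) = P (rel_ranks (ins j dP pre @ [x]), ins j b a)" for b
    using rr_ins[of j] jl by (simp add: Pol_def)
  show ?thesis
    unfolding i1 i2 wt Ysum_def wr Pol0 PolS cv_Cons
    by (simp add: algebra_simps)
qed

lemma S5:
  "Fv n p P k pre (x # rest) a = p * cxP * Yw n p P rQ a
     + (1 - p) * Fv n p P k (pre @ [x]) rest (a @ [True]) + Fv n p P k (pre @ [x]) rest (a @ [False])"
proof -
  let ?f = "\<lambda>j. reach P rP a * collect_val P p k pre (ins (j - mP) dP (x # rest)) a"
  let ?g = "\<lambda>c j. reach P rQ (a @ [c]) * collect_val P p k (pre @ [x]) (ins (j - Suc mP) dP rest) (a @ [c])"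
  let ?h = "\<lambda>j. wt p P j (Some True) rP a * collect_val P p k (ins j dP pre) (x # rest) (ins j True a)
       + wt p P j (Some False) rP a * collect_val P p k (ins j dP pre) (x # rest) (ins j False a)"
  let ?H = "\<lambda>c j. wt p P j (Some True) rQ (a @ [c]) * collect_val P p k (ins j dP (pre @ [x])) rest (ins j True (a @ [c]))
                + wt p P j (Some False) rQ (a @ [c]) * collect_val P p k (ins j dP (pre @ [x])) rest (ins j False (a @ [c]))"
  have A1: "(\<Sum>j\<in>{mP..n}. ?f j) = ?f mP + (\<Sum>j\<in>{Suc mP..n}. ?f j)"
  proof -
    have "{mP..n} = insert mP {Suc mP..n}" using mn by auto
    then show ?thesis by simp
  qed
  have A2: "(\<Sum>j\<in>{Suc mP..n}. ?f j) = p * cxP * (real (n - mP) * (reach P rQ a * P (rQ, a)))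
      + (1 - p) * (\<Sum>j\<in>{Suc mP..n}. ?g True j) + (\<Sum>j\<in>{Suc mP..n}. ?g False j)"
  proof -
    have "(\<Sum>j\<in>{Suc mP..n}. ?f j) = (\<Sum>j\<in>{Suc mP..n}. p * cxP * (reach P rQ a * P (rQ, a))
      + (1 - p) * ?g True j + ?g False j)"
      by (rule sum.cong) (simp_all add: P1)
    also have "\<dots> = p * cxP * (real (n - mP) * (reach P rQ a * P (rQ, a)))
      + (1 - p) * (\<Sum>j\<in>{Suc mP..n}. ?g True j) + (\<Sum>j\<in>{Suc mP..n}. ?g False j)"
      by (simp add: sum.distrib sum_distrib_left)
    finally show ?thesis .
  qed
  have B: "(\<Sum>j<mP. ?h j) = p * cxP * (\<Sum>j<mP. Ysum p P j rQ a)
      + (1 - p) * (\<Sum>j<mP. ?H True j) + (\<Sum>j<mP. ?H False j)"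
  proof -
    have "(\<Sum>j<mP. ?h j) = (\<Sum>j<mP. p * cxP * Ysum p P j rQ a + (1 - p) * ?H True j + ?H False j)"
      by (rule sum.cong[OF refl], rule P3, simp)
    also have "\<dots> = p * cxP * (\<Sum>j<mP. Ysum p P j rQ a)
      + (1 - p) * (\<Sum>j<mP. ?H True j) + (\<Sum>j<mP. ?H False j)"
      by (simp only: sum.distrib sum_distrib_left distrib_left)
    finally show ?thesis .
  qed
  have F1: "Fv n p P k pre (x # rest) a = (\<Sum>j\<in>{mP..n}. ?f j) + (\<Sum>j<mP. ?h j)"
    unfolding Fv_def ..
  have F2: "Fv n p P k (pre @ [x]) rest (a @ [c]) = (\<Sum>j\<in>{Suc mP..n}. ?g c j) + ((\<Sum>j<mP. ?H c j) + ?H c mP)" for c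
    unfolding Fv_def by simp
  have Y: "Yw n p P rQ a = real (n - mP) * reach P rQ a * P (rQ, a) + ((\<Sum>j<mP. Ysum p P j rQ a) + Ysum p P mP rQ a)"
    unfolding Yw_def using la by simp
  show ?thesis
    unfolding F1 F2 Y A1 A2 B diff_self_eq_0 P2
    by (simp only: ring_distribs)
qed

end



lemma main_inv:
  assumes P: "is_policy P" and p: "0 < p" "p \<le> 1" and kn: "k \<le> n"
  shows "length a = length pre \<Longrightarrow> length pre + length rest = n \<Longrightarrow> (\<forall>y\<in>set pre. y \<le> n)
    \<Longrightarrow> (\<forall>y\<in>set rest. y \<le> n)
    \<Longrightarrow> Fv n p P k pre rest a = Tw n p P (rel_ranks pre) a * collect_val (Qp n p P) p k pre rest a"
proof (induction rest arbitrary: pre a)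
  case Nil
  have "{length pre..n} = {n}" using Nil by auto
  then show ?case using Nil kn unfolding Fv_def by (simp add: ins_def Let_def)
next
  case (Cons x rest)
  have mn: "length pre < n" using Cons by simp
  have xn: "x \<le> n" using Cons by simp
  obtain z where rz: "rel_ranks (pre @ [x]) = rel_ranks pre @ [z]" using rel_ranks_snoc by blast
  define T where "T = Tw n p P (rel_ranks pre) a"
  define Y where "Y = Yw n p P (rel_ranks (pre @ [x])) a"
  define Qv where "Qv = Qp n p P (rel_ranks (pre @ [x]), a)"
  let ?cx = "(if x \<le> k then 1 else 0) :: real"
  have la: "length a = length (rel_ranks pre)" using Cons by simp
  have bnd: "0 \<le> Y \<and> Y \<le> T" unfolding Y_def T_def rz
    by (rule S4) (use la mn P p in auto)
  have YT: "Y = Qv * T"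
  proof (cases "T = 0")
    case True then show ?thesis using bnd by simp
  next
    case False
    have "Qv = max 0 (min 1 (Y / T))" unfolding Qv_def Qp_def using False Cons.prems(1)
      by (simp add: rz T_def Y_def)
    also have "\<dots> = Y / T" using bnd False by (simp add: divide_le_eq_1)
    finally show ?thesis using False by simp
  qed
  have T1: "Tw n p P (rel_ranks (pre @ [x])) (a @ [True]) = Y" unfolding Y_def
    by (rule S2) (use Cons.prems(1) in simp)
  have T2: "Tw n p P (rel_ranks (pre @ [x])) (a @ [False]) = T - Y" unfolding Y_def T_def rz
    by (rule S3) (use la mn in auto)
  have S: "Fv n p P k pre (x # rest) a = p * ?cx * Y
     + (1 - p) * Fv n p P k (pre @ [x]) rest (a @ [True]) + Fv n p P k (pre @ [x]) rest (a @ [False])"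
    unfolding Y_def by (rule S5) (use kn Cons.prems mn xn in auto)
  have IH1: "Fv n p P k (pre @ [x]) rest (a @ [True]) = Y * collect_val (Qp n p P) p k (pre @ [x]) rest (a @ [True])"
    using Cons.IH[of "a @ [True]" "pre @ [x]"] Cons.prems T1 by simp
  have IH2: "Fv n p P k (pre @ [x]) rest (a @ [False]) = (T - Y) * collect_val (Qp n p P) p k (pre @ [x]) rest (a @ [False])"
    using Cons.IH[of "a @ [False]" "pre @ [x]"] Cons.prems T2 by simp
  show ?case
    unfolding S IH1 IH2 cv_Cons[of "Qp n p P"] T_def[symmetric] Qv_def[symmetric] YT
    by (simp add: algebra_simps)
qed

lemma ao_length: "xs \<in> arrival_orders n \<Longrightarrow> length xs = n"
  unfolding arrival_orders_def using distinct_card by fastforce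

lemma sum_ins:
  assumes P: "is_policy P" and p: "0 < p" "p \<le> 1" and kn: "k \<le> n" and xs: "xs \<in> arrival_orders n"
  shows "(\<Sum>j\<le>n. collect_val P p k [] (ins j (Suc n) xs) []) = real (Suc n) * collect_val (Qp n p P) p k [] xs []"
proof -
  have l: "length xs = n" using ao_length[OF xs] .
  have s: "\<forall>y\<in>set xs. y \<le> n" using xs unfolding arrival_orders_def by auto
  have "Fv n p P k [] xs [] = Tw n p P (rel_ranks []) [] * collect_val (Qp n p P) p k [] xs []"
    by (rule main_inv[OF P p kn]) (use l s in auto)
  moreover have "Fv n p P k [] xs [] = (\<Sum>j\<le>n. collect_val P p k [] (ins j (Suc n) xs) [])"
    unfolding Fv_def by (simp add: atLeast0AtMost)
  moreover have "Tw n p P (rel_ranks []) [] = real (Suc n)"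
    unfolding Tw_def by simp
  ultimately show ?thesis by simp
qed

lemma set_ins: "set (ins j d xs) = insert d (set xs)"
proof -
  have "set (ins j d xs) = insert d (set (take j xs @ drop j xs))" unfolding ins_def
    by (simp only: set_append set_simps) auto
  then show ?thesis by simp
qed

lemma distinct_ins: "distinct (ins j d xs) \<longleftrightarrow> distinct (d # xs)"
proof -
  have "distinct (ins j d xs) \<longleftrightarrow> distinct (d # (take j xs @ drop j xs))" unfolding ins_def
    by (simp only: distinct_append distinct.simps set_append set_simps) blast
  then show ?thesis by (simp only: append_take_drop_id)
qed

lemma ins_takeWhile: "d \<notin> set xs \<Longrightarrow> j \<le> length xs \<Longrightarrow> length (takeWhile (\<lambda>y. y \<noteq> d) (ins j d xs)) = j"
proof -
  assume d: "d \<notin> set xs" and j: "j \<le> length xs"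
  have "\<forall>y\<in>set (take j xs). y \<noteq> d" using d in_set_takeD by fastforce
  then have "takeWhile (\<lambda>y. y \<noteq> d) (ins j d xs) = take j xs"
    unfolding ins_def by (simp add: takeWhile_append2)
  then show ?thesis using j by simp
qed

lemma take_ins_same: "j \<le> length xs \<Longrightarrow> take j (ins j d xs) = take j xs"
  unfolding ins_def by simp

lemma drop_ins_same: "j \<le> length xs \<Longrightarrow> drop (Suc j) (ins j d xs) = drop j xs"
  unfolding ins_def by simp

lemma ins_inj: "d \<notin> set xs \<Longrightarrow> j \<le> length xs \<Longrightarrow> d \<notin> set xs' \<Longrightarrow> j' \<le> length xs'
  \<Longrightarrow> ins j d xs = ins j' d xs' \<Longrightarrow> xs = xs' \<and> j = j'"
proof -
  assume a: "d \<notin> set xs" "j \<le> length xs" "d \<notin> set xs'" "j' \<le> length xs'" and e: "ins j d xs = ins j' d xs'"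
  have "j = length (takeWhile (\<lambda>y. y \<noteq> d) (ins j d xs))" using ins_takeWhile[OF a(1,2)] by simp
  also have "\<dots> = length (takeWhile (\<lambda>y. y \<noteq> d) (ins j' d xs'))" by (simp only: e)
  also have "\<dots> = j'" using ins_takeWhile[OF a(3,4)] by simp
  finally have jj: "j = j'" .
  have t: "take j xs = take j xs'"
    using take_ins_same[OF a(2), of d] take_ins_same[OF a(4), of d] e jj by simp
  have dr: "drop j xs = drop j xs'"
    using drop_ins_same[OF a(2), of d] drop_ins_same[OF a(4), of d] e jj by simp
  have "xs = take j xs @ drop j xs" by simp
  also have "\<dots> = take j xs' @ drop j xs'" by (simp only: t dr)
  also have "\<dots> = xs'" by simp
  finally show ?thesis using jj by simp
qed

lemma ao_image: "arrival_orders (Suc n) = (\<lambda>(xs, j). ins j (Suc n) xs) ` (arrival_orders n \<times> {..n})"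
proof
  show "(\<lambda>(xs, j). ins j (Suc n) xs) ` (arrival_orders n \<times> {..n}) \<subseteq> arrival_orders (Suc n)"
  proof -
    have "ins j (Suc n) xs \<in> arrival_orders (Suc n)" if xs: "xs \<in> arrival_orders n" for xs j
    proof -
      have "Suc n \<notin> set xs" using xs unfolding arrival_orders_def by auto
      then show ?thesis
        using xs unfolding arrival_orders_def by (auto simp: distinct_ins set_ins)
    qed
    then show ?thesis by auto
  qed
next
  show "arrival_orders (Suc n) \<subseteq> (\<lambda>(xs, j). ins j (Suc n) xs) ` (arrival_orders n \<times> {..n})"
  proof
    fix ys assume ys: "ys \<in> arrival_orders (Suc n)"
    have ly: "length ys = Suc n" using ao_length[OF ys] .
    have "Suc n \<in> set ys" using ys unfolding arrival_orders_def by auto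
    then obtain j where j: "j < length ys" "ys ! j = Suc n" by (auto simp: in_set_conv_nth)
    define xs where "xs = take j ys @ drop (Suc j) ys"
    have e: "ins j (Suc n) xs = ys"
    proof -
      have "take j xs = take j ys" "drop j xs = drop (Suc j) ys" using j unfolding xs_def by auto
      then show ?thesis unfolding ins_def using id_take_nth_drop[OF j(1)] j(2) by simp
    qed
    have lx: "length xs = n" using j ly unfolding xs_def by simp
    have dy: "distinct ys" "set ys = {1..Suc n}" using ys unfolding arrival_orders_def by auto
    then have dx: "distinct xs" "Suc n \<notin> set xs" using e distinct_ins[of j "Suc n" xs] by auto
    have "insert (Suc n) (set xs) = {1..Suc n}" using dy(2) e set_ins[of j "Suc n" xs] by simp
    then have "set xs = {1..Suc n} - {Suc n}" using dx(2) by blast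
    also have "\<dots> = {1..n}" by auto
    finally have "set xs = {1..n}" .
    then have "xs \<in> arrival_orders n" using dx unfolding arrival_orders_def by simp
    moreover have "j \<in> {..n}" using j ly by simp
    ultimately have "(xs, j) \<in> arrival_orders n \<times> {..n}" by simp
    moreover have "ys = (\<lambda>(xs, j). ins j (Suc n) xs) (xs, j)" using e by simp
    ultimately show "ys \<in> (\<lambda>(xs, j). ins j (Suc n) xs) ` (arrival_orders n \<times> {..n})"
      by (rule rev_image_eqI)
  qed
qed

lemma ao_inj: "inj_on (\<lambda>(xs, j). ins j (Suc n) xs) (arrival_orders n \<times> {..n})"
proof (rule inj_onI)
  fix u v assume u: "u \<in> arrival_orders n \<times> {..n}" and v: "v \<in> arrival_orders n \<times> {..n}"
    and e0: "(\<lambda>(xs, j). ins j (Suc n) xs) u = (\<lambda>(xs, j). ins j (Suc n) xs) v"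
  obtain xs j where uu: "u = (xs, j)" by (cases u)
  obtain xs' j' where vv: "v = (xs', j')" by (cases v)
  have a: "xs \<in> arrival_orders n" "j \<le> n" "xs' \<in> arrival_orders n" "j' \<le> n" using u v uu vv by auto
  have e: "ins j (Suc n) xs = ins j' (Suc n) xs'" using e0 uu vv by simp
  have "Suc n \<notin> set xs" "Suc n \<notin> set xs'" using a unfolding arrival_orders_def by auto
  moreover have "j \<le> length xs" "j' \<le> length xs'" using a ao_length by auto
  ultimately have "xs = xs' \<and> j = j'" by (intro ins_inj[OF _ _ _ _ e])
  then show "u = v" using uu vv by simp
qed

lemma ao_sum: "(\<Sum>ys\<in>arrival_orders (Suc n). f ys) = (\<Sum>xs\<in>arrival_orders n. \<Sum>j\<le>n. f (ins j (Suc n) xs))"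
  unfolding ao_image sum.reindex[OF ao_inj] sum.cartesian_product by (simp add: case_prod_unfold)

lemma collect_prob_eq:
  assumes P: "is_policy P" and p: "0 < p" "p \<le> 1" and kn: "k \<le> n"
  shows "collect_prob (Suc n) p P k = collect_prob n p (Qp n p P) k"
proof -
  have "(\<Sum>ys\<in>arrival_orders (Suc n). collect_val P p k [] ys []) =
        (\<Sum>xs\<in>arrival_orders n. real (Suc n) * collect_val (Qp n p P) p k [] xs [])"
    unfolding ao_sum by (rule sum.cong) (use sum_ins[OF P p kn] in auto)
  also have "\<dots> = real (Suc n) * (\<Sum>xs\<in>arrival_orders n. collect_val (Qp n p P) p k [] xs [])"
    by (rule sum_distrib_left[symmetric])
  finally have e: "(\<Sum>ys\<in>arrival_orders (Suc n). collect_val P p k [] ys []) =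
     real (Suc n) * (\<Sum>xs\<in>arrival_orders n. collect_val (Qp n p P) p k [] xs [])" .
  have f: "(fact (Suc n) :: real) = real (Suc n) * fact n" by (simp only: fact_Suc of_nat_mult of_nat_fact)
  show ?thesis unfolding collect_prob_def e f by simp
qed

lemma ao_finite: "finite (arrival_orders n)"
proof -
  have "arrival_orders n \<subseteq> {xs. set xs \<subseteq> {1..n} \<and> length xs = n}"
    using ao_length unfolding arrival_orders_def by auto
  then show ?thesis using finite_lists_length_eq[of "{1..n}" n] finite_subset by blast
qed

lemma cp_bound:
  assumes Q: "is_policy Q" and p: "0 \<le> p" "p \<le> 1"
  shows "collect_prob n p Q k \<le> real (card (arrival_orders n)) / fact n"
proof -
  have "(\<Sum>xs\<in>arrival_orders n. collect_val Q p k [] xs []) \<le> real (card (arrival_orders n)) * 1"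
    by (rule sum_bounded_above) (use cv_bounds[OF Q p] in auto)
  then show ?thesis unfolding collect_prob_def
    by (intro divide_right_mono) auto
qed

theorem lemma1:
  fixes p :: real and n :: nat
  assumes "0 < p" and "p \<le> 1" and "n \<ge> 1"
  shows "gamma_star n p \<ge> gamma_star (n + 1) p"
proof -
  define g where "g m P = Min ((\<lambda>k. collect_prob m p P k / (1 - (1 - p) ^ k)) ` {1..m})" for m P
  have gs: "gamma_star m p = (SUP P\<in>{P. is_policy P}. g m P)" for m
    unfolding gamma_star_def g_def ..
  define B where "B = real (card (arrival_orders n)) / fact n / p"
  have bdd: "bdd_above (g n ` {P. is_policy P})"
  proof (rule bdd_aboveI2)
    fix Q assume Q: "Q \<in> {P. is_policy P}"
    have "g n Q \<le> collect_prob n p Q 1 / (1 - (1 - p) ^ 1)"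
      unfolding g_def
    proof (rule Min_le)
      show "collect_prob n p Q 1 / (1 - (1 - p) ^ 1) \<in> (\<lambda>k. collect_prob n p Q k / (1 - (1 - p) ^ k)) ` {1..n}"
        by (rule image_eqI[where x=1]) (use assms in auto)
    qed simp
    also have "\<dots> = collect_prob n p Q 1 / p" by simp
    also have "\<dots> \<le> B" unfolding B_def
      by (rule divide_right_mono) (use cp_bound[of Q p n 1] Q assms in auto)
    finally show "g n Q \<le> B" .
  qed
  have step: "\<exists>Q\<in>{P. is_policy P}. g (n + 1) P \<le> g n Q" if P: "P \<in> {P. is_policy P}" for P
  proof (intro bexI)
    have Pp: "is_policy P" using P by simp
    let ?rP = "\<lambda>k. collect_prob (Suc n) p P k / (1 - (1 - p) ^ k)"
    let ?rQ = "\<lambda>k. collect_prob n p (Qp n p P) k / (1 - (1 - p) ^ k)"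
    have "g (n + 1) P = Min (?rP ` {1..Suc n})" unfolding g_def by simp
    also have "\<dots> \<le> Min (?rP ` {1..n})"
      by (rule Min_antimono) (use assms in auto)
    also have "?rP ` {1..n} = ?rQ ` {1..n}"
      by (rule image_cong[OF refl]) (use collect_prob_eq[OF Pp assms(1,2)] in auto)
    also have "Min (?rQ ` {1..n}) = g n (Qp n p P)" unfolding g_def ..
    finally show "g (n + 1) P \<le> g n (Qp n p P)" .
    show "Qp n p P \<in> {P. is_policy P}" using Qp_policy by simp
  qed
  have ne: "{P. is_policy P} \<noteq> {}"
  proof -
    have "is_policy (\<lambda>_. 0)" unfolding is_policy_def by simp
    then show ?thesis by blast
  qed
  show ?thesis unfolding gs
    by (rule cSUP_mono[OF ne bdd step])
qed


end
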